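(* Let $l\ge1$ and $n\ge4l+2$. For any equilateral $(2l+1)$-pointed star $S$ inscribed in $P_n$, the number of points of $S$ that are vertices of $P_n$ or midpoints of edges of $P_n$ is either $0$ or $\gcd(n,2l+1)$.
   Context: $P_n$ is the boundary of the regular polygon in $\mathbb{R}^2$ with vertices the $n$-th roots of unity, Euclidean metric $\|x-y\|$. $d_{P_n}(x,y)\in[0,1)$ is the counterclockwise arc length of $P_n$ from $x$ to $y$ divided by the perimeter. The directed Vietoris–Rips graph $\mathrm{VR}_<(P_n;r)$ has vertex set $P_n$ and, for distinct $u,w$ with $\|u-w\|<r$, the edge $u\to w$ if $d_{P_n}(u,w)<d_{P_n}(w,u)$, else $w\to u$; it is cyclic if whenever $u_0\to u_1$, every $w$ strictly counterclockwise-between them has $u_0\to w$ and $w\to u_1$. $r_n=\sup\{r\ge0:\mathrm{VR}_<(P_n;r')\text{ cyclic for all }0<r'<r\}$. For $0<r<r_n$, $g_r(p)$ is the first point $w$ met moving counterclockwise from $p$ with $\|p-w\|=r$, and $g_{r_n}=\lim_{r\to r_n}g_r$. An equilateral $(2l+1)$-pointed star of side $r\in(0,r_n]$ inscribed in $P_n$ is a cyclic sequence $u_0,\dots,u_{2l}$ with $u_{i+1}=g_r(u_i)$ (indices mod $2l+1$) and $\sum_i d_{P_n}(u_i,u_{i+1})=l$. *)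

theory Defs
  imports "HOL-Analysis.Analysis"
begin

text \<open>The plane R^2 is modelled by the complex numbers (norm = Euclidean norm).
  The n-th roots of unity are the vertices of the regular polygon P_n.\<close>

definition vtx :: "nat \<Rightarrow> int \<Rightarrow> complex" where
  "vtx n k = cis (2 * pi * real_of_int k / real n)"

text \<open>Constant-speed (arc length proportional) parametrisation of the boundary P_n,
  counterclockwise, with period 1: on [k/n, (k+1)/n] it runs along the edge from
  vertex k to vertex k+1.\<close>

definition polyP :: "nat \<Rightarrow> real \<Rightarrow> complex" where
  "polyP n t = (let k = \<lfloor>real n * t\<rfloor>; s = real n * t - real_of_int k
                in complex_of_real (1 - s) * vtx n k + complex_of_real s * vtx n (k + 1))"

definition Pn :: "nat \<Rightarrow> complex set" where
  "Pn n = polyP n ` {0..<1}"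

definition param :: "nat \<Rightarrow> complex \<Rightarrow> real" where
  "param n x = (THE t. t \<in> {0..<1} \<and> polyP n t = x)"

text \<open>Counterclockwise arc length from x to y divided by the perimeter.\<close>

definition dP :: "nat \<Rightarrow> complex \<Rightarrow> complex \<Rightarrow> real" where
  "dP n x y = frac (param n y - param n x)"

definition vr_edge :: "nat \<Rightarrow> real \<Rightarrow> complex \<Rightarrow> complex \<Rightarrow> bool" where
  "vr_edge n r u w \<longleftrightarrow> u \<in> Pn n \<and> w \<in> Pn n \<and> u \<noteq> w \<and> norm (u - w) < r
      \<and> dP n u w \<le> dP n w u"

definition ccw_between :: "nat \<Rightarrow> complex \<Rightarrow> complex \<Rightarrow> complex \<Rightarrow> bool" where
  "ccw_between n a w b \<longleftrightarrow> w \<in> Pn n \<and> w \<noteq> a \<and> w \<noteq> b \<and> dP n a w < dP n a b"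

definition vr_cyclic :: "nat \<Rightarrow> real \<Rightarrow> bool" where
  "vr_cyclic n r \<longleftrightarrow> (\<forall>u0 u1. vr_edge n r u0 u1 \<longrightarrow>
      (\<forall>w. ccw_between n u0 w u1 \<longrightarrow> vr_edge n r u0 w \<and> vr_edge n r w u1))"

definition rn :: "nat \<Rightarrow> real" where
  "rn n = Sup {r. r \<ge> 0 \<and> (\<forall>r'. 0 < r' \<and> r' < r \<longrightarrow> vr_cyclic n r')}"

text \<open>g_r(p): first point met moving counterclockwise from p at distance r from p.\<close>

definition g_r :: "nat \<Rightarrow> real \<Rightarrow> complex \<Rightarrow> complex" where
  "g_r n r p = polyP n (param n p +
      Inf {t. 0 < t \<and> t < 1 \<and> norm (p - polyP n (param n p + t)) = r})"

definition g :: "nat \<Rightarrow> real \<Rightarrow> complex \<Rightarrow> complex" where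
  "g n r p = (if r < rn n then g_r n r p else Lim (at_left (rn n)) (\<lambda>r'. g_r n r' p))"

definition equilateral_star :: "nat \<Rightarrow> nat \<Rightarrow> real \<Rightarrow> (nat \<Rightarrow> complex) \<Rightarrow> bool" where
  "equilateral_star n l r u \<longleftrightarrow> 0 < r \<and> r \<le> rn n
      \<and> (\<forall>i < 2*l+1. u i \<in> Pn n)
      \<and> (\<forall>i < 2*l+1. u ((i + 1) mod (2*l+1)) = g n r (u i))
      \<and> (\<Sum>i < 2*l+1. dP n (u i) (u ((i + 1) mod (2*l+1)))) = real l"

definition vertices :: "nat \<Rightarrow> complex set" where
  "vertices n = {vtx n k | k. True}"

definition midpoints :: "nat \<Rightarrow> complex set" where
  "midpoints n = {(vtx n k + vtx n (k + 1)) / 2 | k. True}"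

end

theory Submission
  imports Defs
begin



lemma vtx_add: "vtx n (k + j) = cis (2*pi*real_of_int j/real n) * vtx n k"
  unfolding vtx_def by (simp add: cis_mult add_divide_distrib distrib_left algebra_simps)

lemma polyP_shift:
  assumes "n > 0"
  shows "polyP n (t + real_of_int j / real n) = cis (2*pi*real_of_int j/real n) * polyP n t"
proof -
  have e: "real n * (t + real_of_int j / real n) = real n * t + real_of_int j"
    using assms by (simp add: field_simps)
  have f: "\<lfloor>real n * t + real_of_int j\<rfloor> = \<lfloor>real n * t\<rfloor> + j" by simp
  define k where "k = \<lfloor>real n * t\<rfloor>"
  define s where "s = real n * t - real_of_int k"
  have s2: "real n * t + real_of_int j - real_of_int (k + j) = s" unfolding s_def by simp
  have v1: "vtx n (k + j) = cis (2*pi*real_of_int j/real n) * vtx n k" by (rule vtx_add)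
  have v2: "vtx n (k + j + 1) = cis (2*pi*real_of_int j/real n) * vtx n (k+1)"
    using vtx_add[of n "k+1" j] by (simp add: ac_simps)
  show ?thesis unfolding polyP_def Let_def e f k_def[symmetric] s_def[symmetric] s2 v1 v2
    by (simp add: algebra_simps)
qed

lemma polyP_periodic:
  assumes "n > 0"
  shows "polyP n (t + real_of_int m) = polyP n t"
proof -
  have "real_of_int m = real_of_int (m * int n) / real n" using assms by simp
  then have "polyP n (t + real_of_int m) = cis (2*pi*real_of_int (m * int n)/real n) * polyP n t"
    using polyP_shift[OF assms, of t "m * int n"] by simp
  also have "cis (2*pi*real_of_int (m * int n)/real n) = 1"
  proof -
    have "2*pi*real_of_int (m * int n)/real n = 2*pi*real_of_int m" using assms by simp
    then show ?thesis by simp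
  qed
  finally show ?thesis by simp
qed

lemma polyP_frac: "n > 0 \<Longrightarrow> polyP n (frac t) = polyP n t"
  using polyP_periodic[of n "frac t" "\<lfloor>t\<rfloor>"] by (simp add: frac_def)

lemma vtx_cnj: "cnj (vtx n k) = vtx n (-k)"
  unfolding vtx_def by (simp add: cis_cnj)

lemma polyP_neg:
  assumes "n > 0"
  shows "polyP n (-t) = cnj (polyP n t)"
proof (cases "real n * t \<in> \<int>")
  case True
  then obtain k where k: "real n * t = real_of_int k" by (metis Ints_cases)
  have a: "real n * - t = real_of_int (-k)" using k by simp
  show ?thesis unfolding polyP_def Let_def a k by (simp add: vtx_cnj)
next
  case False
  define k where "k = \<lfloor>real n * t\<rfloor>"
  have fl: "\<lfloor>real n * - t\<rfloor> = - k - 1"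
  proof (rule floor_unique)
    have "real_of_int k \<le> real n * t" "real n * t < real_of_int k + 1" unfolding k_def by linarith+
    moreover have "real n * t \<noteq> real_of_int k" using False by (metis Ints_of_int)
    ultimately show "real_of_int (- k - 1) \<le> real n * - t" "real n * - t < real_of_int (- k - 1) + 1" by auto
  qed
  have m: "- 1 - k = - k - 1" by simp
  show ?thesis unfolding polyP_def Let_def fl k_def[symmetric]
    by (simp add: vtx_cnj algebra_simps m)
qed

lemma polyP_edge:
  assumes "n > 0" "real_of_int k / real n \<le> t" "t \<le> real_of_int (k+1) / real n"
  shows "polyP n t = vtx n k + complex_of_real (real n * t - real_of_int k) * (vtx n (k+1) - vtx n k)"
proof (cases "t = real_of_int (k+1) / real n")
  case True
  have "real n * t = real_of_int (k+1)" using True assms(1) by simp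
  then show ?thesis unfolding polyP_def Let_def by simp
next
  case False
  have "real_of_int k \<le> real n * t" "real n * t < real_of_int k + 1"
    using assms False by (auto simp: field_simps)
  then have "\<lfloor>real n * t\<rfloor> = k" by linarith
  then show ?thesis unfolding polyP_def Let_def by (simp add: algebra_simps)
qed




lemma polyP_cont_piece:
  assumes "n > 0"
  shows "continuous_on {real_of_int k / real n .. real_of_int (k+1) / real n} (polyP n)"
proof -
  have "continuous_on {real_of_int k / real n .. real_of_int (k+1) / real n}
     (\<lambda>t. vtx n k + complex_of_real (real n * t - real_of_int k) * (vtx n (k+1) - vtx n k))"
    by (intro continuous_intros)
  then show ?thesis
    by (rule continuous_on_eq) (use polyP_edge[OF assms] in auto)
qed

lemma polyP_cont: assumes "n > 0" shows "continuous_on UNIV (polyP n)"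
proof (rule continuous_at_imp_continuous_on, intro ballI)
  fix t :: real
  define k where "k = \<lfloor>real n * t\<rfloor>"
  have c1: "continuous_on {real_of_int (k-1) / real n .. real_of_int k / real n} (polyP n)"
    using polyP_cont_piece[OF assms, of "k-1"] by simp
  have c2: "continuous_on {real_of_int k / real n .. real_of_int (k+1) / real n} (polyP n)"
    using polyP_cont_piece[OF assms, of "k"] by simp
  have u: "{real_of_int (k-1) / real n .. real_of_int k / real n} \<union> {real_of_int k / real n .. real_of_int (k+1) / real n}
        = {real_of_int (k-1) / real n .. real_of_int (k+1) / real n}"
    using assms by (auto simp: field_simps)
  have c: "continuous_on {real_of_int (k-1) / real n .. real_of_int (k+1) / real n} (polyP n)"
    using continuous_on_closed_Un[OF _ _ c1 c2] u by simp
  have "real_of_int k \<le> real n * t" "real n * t < real_of_int k + 1" unfolding k_def by linarith+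
  then have "t \<in> interior {real_of_int (k-1) / real n .. real_of_int (k+1) / real n}"
    using assms by (auto simp: field_simps)
  then show "isCont (polyP n) t" using continuous_on_interior[OF c] by blast
qed

lemma polyP_vtx: "n > 0 \<Longrightarrow> polyP n (real_of_int k / real n) = vtx n k"
  unfolding polyP_def Let_def by simp

lemma polyP_mid: assumes "n > 0"
  shows "polyP n ((real_of_int k + 1/2) / real n) = (vtx n k + vtx n (k+1)) / 2"
proof -
  have e: "real n * ((real_of_int k + 1/2) / real n) = real_of_int k + 1/2" using assms by simp
  have f: "\<lfloor>real_of_int k + 1/2 :: real\<rfloor> = k" by linarith
  show ?thesis unfolding polyP_def Let_def e f by (simp add: field_simps)
qed

lemma cos_lt_cos_pi_n:
  assumes "n > 0" "3 \<le> m" "m \<le> 2 * int n - 3"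
  shows "cos (real_of_int m * pi / real n) < cos (pi / real n)"
proof (cases "m \<le> int n")
  case True
  have "real_of_int m \<le> real n" using True by linarith
  then have "real_of_int m * pi / real n \<le> pi" using assms(1) by (simp add: field_simps)
  moreover have "pi / real n < real_of_int m * pi / real n"
    using assms by (simp add: field_simps)
  moreover have "0 \<le> real_of_int m * pi / real n" using assms by simp
  ultimately show ?thesis
    by (subst cos_mono_less_eq) (use assms(1) in auto)
next
  case False
  have "cos (real_of_int m * pi / real n) = cos (2*pi - real_of_int m * pi / real n)"
    by (simp add: cos_diff)
  also have "2*pi - real_of_int m * pi / real n = real_of_int (2 * int n - m) * pi / real n"
    using assms(1) by (simp add: field_simps)
  also have "cos \<dots> < cos (pi / real n)"
  proof -
    have a: "real_of_int (2 * int n - m) \<le> real n" using False by linarith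
    have "real_of_int (2 * int n - m) * pi / real n \<le> pi" using assms(1) a by (simp add: field_simps)
    moreover have "pi / real n < real_of_int (2 * int n - m) * pi / real n"
    proof -
      have "1 < real_of_int (2 * int n - m)" using assms by linarith
      then have "1 * pi < real_of_int (2 * int n - m) * pi" by (intro mult_strict_right_mono) auto
      then show ?thesis using assms by (simp add: divide_strict_right_mono)
    qed
    moreover have "0 \<le> real_of_int (2 * int n - m)" using assms by simp
    ultimately show ?thesis
      by (subst cos_mono_less_eq) (use assms(1) in auto)
  qed
  finally show ?thesis .
qed

definition hh :: "nat \<Rightarrow> complex \<Rightarrow> real" where
  "hh n z = Re (z * cnj (cis (pi / real n)))"

lemma hh_vtx: "hh n (vtx n j) = cos (real_of_int (2*j - 1) * pi / real n)"
proof -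
  have "2 * pi * real_of_int j / real n + - (pi / real n) = real_of_int (2*j - 1) * pi / real n"
    by (simp add: diff_divide_distrib algebra_simps)
  then show ?thesis unfolding hh_def vtx_def cis_cnj cis_mult by simp
qed

lemma hh_edge: "hh n (v + complex_of_real s * (w - v)) = (1 - s) * hh n v + s * hh n w"
  unfolding hh_def by (simp add: algebra_simps)

lemma vtx_ne: assumes "n \<ge> 3" shows "vtx n (k+1) \<noteq> vtx n k"
proof
  assume "vtx n (k+1) = vtx n k"
  then have "cis (2*pi/real n) * vtx n k = 1 * vtx n k" using vtx_add[of n k 1] by simp
  moreover have "vtx n k \<noteq> 0" unfolding vtx_def by simp
  ultimately have "cis (2*pi/real n) = 1" by (metis mult_cancel_right)
  then have "sin (2*pi/real n) = 0" by (metis cis.sel(2) one_complex.sel(2))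
  moreover have "0 < 2*pi/real n" "2*pi/real n < pi" using assms by (auto simp: field_simps)
  ultimately show False using sin_gt_zero by fastforce
qed

lemma polyP_inj_core:
  assumes n: "n \<ge> 4" and a: "0 \<le> a" "a < 1 / real n" and b: "0 \<le> b" "b < 1"
    and eq: "polyP n a = polyP n b"
  shows "a = b"
proof -
  have n0: "n > 0" using n by simp
  define j where "j = \<lfloor>real n * b\<rfloor>"
  define s' where "s' = real n * b - real_of_int j"
  define s where "s = real n * a"
  have s'r: "0 \<le> s'" "s' < 1" unfolding s'_def j_def by linarith+
  have sr: "0 \<le> s" "s < 1" unfolding s_def using a n0 by (auto simp: field_simps)
  have j0: "0 \<le> j" unfolding j_def using b by simp
  have "real n * b < real n" using b n0 by simp
  then have j1: "j \<le> int n - 1" unfolding j_def by linarith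
  have fa: "\<lfloor>real n * a\<rfloor> = 0" using sr unfolding s_def by linarith
  have Pa: "polyP n a = vtx n 0 + complex_of_real s * (vtx n 1 - vtx n 0)"
    unfolding polyP_def Let_def fa s_def by (simp add: algebra_simps)
  have Pb: "polyP n b = vtx n j + complex_of_real s' * (vtx n (j+1) - vtx n j)"
    unfolding polyP_def Let_def j_def[symmetric] s'_def[symmetric] by (simp add: algebra_simps)
  define c where "c = cos (pi / real n)"
  have ha: "hh n (polyP n a) = c"
    unfolding Pa hh_edge hh_vtx c_def by (simp add: algebra_simps)
  have hb: "hh n (polyP n b) = (1 - s') * cos (real_of_int (2*j - 1) * pi / real n)
      + s' * cos (real_of_int (2*j + 1) * pi / real n)"
    unfolding Pb hh_edge hh_vtx by (simp add: algebra_simps)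
  have ne: "vtx n 1 \<noteq> vtx n 0" using vtx_ne[of n 0] n by simp
  consider "j = 0" | "j = 1" | "2 \<le> j \<and> j \<le> int n - 2" | "j = int n - 1" using j0 j1 by linarith
  then show ?thesis
  proof cases
    case 1
    then have "complex_of_real s * (vtx n 1 - vtx n 0) = complex_of_real s' * (vtx n 1 - vtx n 0)"
      using eq Pa Pb by simp
    then have "s = s'" using ne by simp
    then show ?thesis using 1 unfolding s_def s'_def using n0 by simp
  next
    case 2
    have lt: "cos (real_of_int (2*j + 1) * pi / real n) < c"
      unfolding c_def using 2 n by (intro cos_lt_cos_pi_n) auto
    have e1: "cos (real_of_int (2*j - 1) * pi / real n) = c" unfolding c_def 2 by simp
    show ?thesis
    proof (cases "s' = 0")
      case True
      then have "polyP n b = vtx n 1" using Pb 2 by simp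
      then have "complex_of_real (1 - s) * (vtx n 1 - vtx n 0) = 0" using eq Pa by (simp add: algebra_simps)
      then have "s = 1" using ne by simp
      then show ?thesis using sr by simp
    next
      case False
      then have "s' * cos (real_of_int (2*j + 1) * pi / real n) < s' * c" using lt s'r by simp
      then have "hh n (polyP n b) < c" unfolding hb e1 by (simp add: algebra_simps)
      then show ?thesis using ha eq by simp
    qed
  next
    case 3
    have l1: "cos (real_of_int (2*j - 1) * pi / real n) < c"
      unfolding c_def using 3 n by (intro cos_lt_cos_pi_n) auto
    have l2: "cos (real_of_int (2*j + 1) * pi / real n) < c"
      unfolding c_def using 3 n by (intro cos_lt_cos_pi_n) auto
    have "(1 - s') * cos (real_of_int (2*j - 1) * pi / real n) < (1 - s') * c" using l1 s'r by simp
    moreover have "s' * cos (real_of_int (2*j + 1) * pi / real n) \<le> s' * c" using l2 s'r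
      by (simp add: mult_left_mono)
    ultimately have "hh n (polyP n b) < c" unfolding hb by (simp add: algebra_simps)
    then show ?thesis using ha eq by simp
  next
    case 4
    have l1: "cos (real_of_int (2*j - 1) * pi / real n) < c"
      unfolding c_def using 4 n by (intro cos_lt_cos_pi_n) auto
    have jr: "real_of_int j = real n - 1" using 4 by simp
    have "real_of_int (2*j + 1) * pi / real n = 2*pi - pi / real n"
      using n0 unfolding of_int_add of_int_mult jr by (simp add: field_simps)
    then have "cos (real_of_int (2*j + 1) * pi / real n) = cos (2*pi - pi / real n)" by simp
    also have "\<dots> = c" unfolding c_def by (simp add: cos_diff)
    finally have e2: "cos (real_of_int (2*j + 1) * pi / real n) = c" .
    have "(1 - s') * cos (real_of_int (2*j - 1) * pi / real n) < (1 - s') * c" using l1 s'r by simp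
    then have "hh n (polyP n b) < c" unfolding hb e2 by (simp add: algebra_simps)
    then show ?thesis using ha eq by simp
  qed
qed




lemma polyP_inj:
  assumes n: "n \<ge> 4" and eq: "polyP n a = polyP n b"
  shows "a - b \<in> \<int>"
proof -
  have n0: "n > 0" using n by simp
  define k where "k = \<lfloor>real n * a\<rfloor>"
  define a' where "a' = a + real_of_int (-k) / real n"
  define b' where "b' = frac (b + real_of_int (-k) / real n)"
  have "real_of_int k \<le> real n * a" "real n * a < real_of_int k + 1" unfolding k_def by linarith+
  moreover have "real n * a' = real n * a - real_of_int k" unfolding a'_def using n0 by (simp add: field_simps)
  ultimately have "0 \<le> real n * a'" "real n * a' < 1" by linarith+
  then have a'r: "0 \<le> a'" "a' < 1 / real n" using n0 by (auto simp: field_simps zero_le_mult_iff)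
  have b'r: "0 \<le> b'" "b' < 1" unfolding b'_def by (auto simp: frac_lt_1)
  have "polyP n a' = polyP n b'"
    unfolding a'_def b'_def polyP_frac[OF n0] polyP_shift[OF n0] eq ..
  then have "a' = b'" using polyP_inj_core[OF n a'r b'r] by simp
  then have "a - b = - real_of_int \<lfloor>b + real_of_int (-k) / real n\<rfloor>"
    unfolding a'_def b'_def frac_def by simp
  then show ?thesis by simp
qed

lemma polyP_eq_iff: "n \<ge> 4 \<Longrightarrow> polyP n a = polyP n b \<longleftrightarrow> a - b \<in> \<int>"
proof
  assume "a - b \<in> \<int>" "n \<ge> 4"
  then obtain m where "a - b = real_of_int m" by (metis Ints_cases)
  then have "a = b + real_of_int m" by simp
  then show "polyP n a = polyP n b" using polyP_periodic[of n b m] \<open>n \<ge> 4\<close> by simp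
qed (rule polyP_inj)

lemma param_polyP: assumes "n \<ge> 4" shows "param n (polyP n t) = frac t"
  unfolding param_def
proof (rule the_equality)
  show "frac t \<in> {0..<1} \<and> polyP n (frac t) = polyP n t"
    using assms polyP_frac[of n t] by (simp add: frac_lt_1)
next
  fix x assume x: "x \<in> {0..<1} \<and> polyP n x = polyP n t"
  then have "x - t \<in> \<int>" using polyP_inj assms by blast
  then have "frac (t + (x - t)) = frac t" by (rule frac_add_int_right)
  then have "frac x = frac t" by simp
  then show "x = frac t" using x by simp
qed

lemma Pn_range: "n > 0 \<Longrightarrow> Pn n = range (polyP n)"
  unfolding Pn_def
proof safe
  fix t assume "n > 0"
  show "polyP n t \<in> polyP n ` {0..<1}"
  proof (rule image_eqI)
    show "polyP n t = polyP n (frac t)" using polyP_frac[of n t] \<open>n > 0\<close> by simp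
    show "frac t \<in> {0..<1}" by (simp add: frac_lt_1)
  qed
qed auto

lemma dP_polyP: assumes "n \<ge> 4" shows "dP n (polyP n a) (polyP n b) = frac (b - a)"
proof -
  have "frac b - frac a = (b - a) + (real_of_int \<lfloor>a\<rfloor> - real_of_int \<lfloor>b\<rfloor>)" unfolding frac_def by simp
  also have "\<dots> = (b - a) + real_of_int (\<lfloor>a\<rfloor> - \<lfloor>b\<rfloor>)" by simp
  finally show ?thesis unfolding dP_def param_polyP[OF assms] by (simp only: frac_add_of_int_right)
qed

definition L :: "nat \<Rightarrow> real \<Rightarrow> real \<Rightarrow> real" where
  "L n a b = cmod (polyP n a - polyP n b)"

lemma L_sym: "L n a b = L n b a"
  unfolding L_def by (simp add: norm_minus_commute)

lemma L_shift: assumes "n > 0"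
  shows "L n (a + real_of_int j / real n) (b + real_of_int j / real n) = L n a b"
  unfolding L_def polyP_shift[OF assms] by (simp flip: right_diff_distrib add: norm_mult)

lemma L_per: assumes "n > 0" shows "L n a (b + real_of_int m) = L n a b" "L n (a + real_of_int m) b = L n a b"
  unfolding L_def polyP_periodic[OF assms] by auto

lemma L_neg: assumes "n > 0" shows "L n (-a) (-b) = L n a b"
  unfolding L_def polyP_neg[OF assms] by (metis complex_cnj_diff complex_mod_cnj)

lemma L_refl: assumes "n > 0"
  shows "L n (real_of_int j / real n - a) (real_of_int j / real n - b) = L n a b"
  using L_shift[OF assms, of "-a" j "-b"] L_neg[OF assms, of a b] by (simp add: algebra_simps)

lemma L_same: "L n a a = 0" unfolding L_def by simp

lemma L_cont2: assumes "n > 0" and cf: "continuous_on UNIV f" and cg: "continuous_on UNIV g1"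
  shows "continuous_on UNIV (\<lambda>t. L n (f t) (g1 t))"
proof -
  have "continuous_on UNIV (\<lambda>t. polyP n (f t))"
    using continuous_on_compose2[OF polyP_cont[OF assms(1)] cf] by simp
  moreover have "continuous_on UNIV (\<lambda>t. polyP n (g1 t))"
    using continuous_on_compose2[OF polyP_cont[OF assms(1)] cg] by simp
  ultimately show ?thesis unfolding L_def by (intro continuous_intros)
qed

lemma L_cont_a: assumes "n > 0" shows "continuous_on S (\<lambda>t. L n a (b + t))"
proof -
  have "continuous_on UNIV (\<lambda>t. L n ((\<lambda>x. a) t) ((\<lambda>x. b + x) t))"
    by (rule L_cont2[OF assms]) (intro continuous_intros)+
  then show ?thesis by (rule continuous_on_subset) simp
qed

lemma L_cont_b: assumes "n > 0" shows "continuous_on S (\<lambda>t. L n (a + t) b)"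
  using L_cont_a[OF assms, of S b a] by (simp add: L_sym)

lemma L_cont_c: assumes "n > 0" shows "continuous_on S (\<lambda>t. L n (a + t) (b + t))"
proof -
  have "continuous_on UNIV (\<lambda>t. L n ((\<lambda>x. a + x) t) ((\<lambda>x. b + x) t))"
    by (rule L_cont2[OF assms]) (intro continuous_intros)+
  then show ?thesis by (rule continuous_on_subset) simp
qed

lemma L_cont_d: assumes "n > 0" shows "continuous_on S (\<lambda>t. L n a t)"
  using L_cont_a[OF assms, of S a 0] by simp

lemma L_cont_e: assumes "n > 0" shows "continuous_on S (\<lambda>t. L n t b)"
  using L_cont_d[OF assms, of S b] by (simp add: L_sym)




lemma VM_iff:
  assumes n: "n \<ge> 4"
  shows "polyP n t \<in> vertices n \<union> midpoints n \<longleftrightarrow> real (2*n) * t \<in> \<int>"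
proof
  have n0: "n > 0" using n by simp
  assume "polyP n t \<in> vertices n \<union> midpoints n"
  then consider k where "polyP n t = vtx n k" | k where "polyP n t = (vtx n k + vtx n (k+1)) / 2"
    unfolding vertices_def midpoints_def by blast
  then show "real (2*n) * t \<in> \<int>"
  proof cases
    case (1 k)
    then have "polyP n t = polyP n (real_of_int k / real n)" using polyP_vtx[OF n0] by simp
    then have "t - real_of_int k / real n \<in> \<int>" using polyP_eq_iff[OF n] by blast
    then obtain m where m: "t - real_of_int k / real n = real_of_int m" by (metis Ints_cases)
    have "real (2*n) * t = real_of_int (2*k + 2 * int n * m)" using n0 m by (simp add: field_simps)
    then show ?thesis by simp
  next
    case (2 k)
    then have "polyP n t = polyP n ((real_of_int k + 1/2) / real n)" by (subst polyP_mid[OF n0])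
    then have "t - (real_of_int k + 1/2) / real n \<in> \<int>" using polyP_eq_iff[OF n] by blast
    then obtain m where m: "t - (real_of_int k + 1/2) / real n = real_of_int m" by (metis Ints_cases)
    have "real (2*n) * t = real_of_int (2*k + 1 + 2 * int n * m)" using n0 m by (simp add: field_simps)
    then show ?thesis by simp
  qed
next
  have n0: "n > 0" using n by simp
  assume "real (2*n) * t \<in> \<int>"
  then obtain j where j: "real (2*n) * t = real_of_int j" by (metis Ints_cases)
  show "polyP n t \<in> vertices n \<union> midpoints n"
  proof (cases "even j")
    case True
    then obtain k where k: "j = 2 * k" by auto
    have "t = real_of_int k / real n" using j k n0 by (simp add: field_simps)
    then show ?thesis using polyP_vtx[OF n0] unfolding vertices_def by auto
  next
    case False
    then obtain k where k: "j = 2 * k + 1" by (metis oddE)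
    have "t = (real_of_int k + 1/2) / real n" using j k n0 by (simp add: field_simps)
    then show ?thesis using polyP_mid[OF n0] unfolding midpoints_def by auto
  qed
qed

lemma cmod_para: "(cmod (A - Y))^2 + (cmod (A + Y))^2 = 2 * (cmod A)^2 + 2 * (cmod Y)^2"
  by (simp only: cmod_power2) (simp add: algebra_simps power2_eq_square)

lemma para:
  assumes n: "n \<ge> 3" and h: "h > 0" and k1: "real_of_int k / real n \<le> x - h"
    and k2: "x + h \<le> real_of_int (k+1) / real n"
  shows "(cmod (polyP n (x - h) - z))^2 + (cmod (polyP n (x + h) - z))^2 > 2 * (cmod (polyP n x - z))^2"
proof -
  have n0: "n > 0" using n by simp
  have xr: "real_of_int k / real n \<le> x" "x \<le> real_of_int (k+1) / real n" using h k1 k2 by linarith+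
  define D where "D = vtx n (k+1) - vtx n k"
  define Y where "Y = complex_of_real (real n * h) * D"
  have e0: "polyP n x = vtx n k + complex_of_real (real n * x - real_of_int k) * D"
    unfolding D_def by (rule polyP_edge[OF n0 xr])
  have k1': "x - h \<le> real_of_int (k+1) / real n" and k2': "real_of_int k / real n \<le> x + h"
    using k1 k2 h by linarith+
  have e1: "polyP n (x - h) = polyP n x - Y"
    unfolding e0 Y_def D_def polyP_edge[OF n0 k1 k1'] using h
    by (simp add: algebra_simps)
  have e2: "polyP n (x + h) = polyP n x + Y"
    unfolding e0 Y_def D_def polyP_edge[OF n0 k2' k2] using h
    by (simp add: algebra_simps)
  have "D \<noteq> 0" unfolding D_def using vtx_ne[OF n] by simp
  then have "Y \<noteq> 0" unfolding Y_def using n0 h by simp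
  then have "cmod Y > 0" by simp
  have "(cmod (polyP n (x - h) - z))^2 + (cmod (polyP n (x + h) - z))^2
      = 2 * (cmod (polyP n x - z))^2 + 2 * (cmod Y)^2"
    unfolding e1 e2 using cmod_para[of "polyP n x - z" Y] by (simp add: algebra_simps)
  then show ?thesis using \<open>cmod Y > 0\<close> by simp
qed

lemma exists_edge_sub:
  assumes n0: "n > 0" and ab: "a < b"
  shows "\<exists>x h k. h > 0 \<and> a \<le> x - h \<and> x + h \<le> b \<and> real_of_int k / real n \<le> x - h
     \<and> x + h \<le> real_of_int (k+1) / real n"
proof -
  define k where "k = \<lfloor>real n * a\<rfloor>"
  have k1: "real_of_int k / real n \<le> a" "a < real_of_int (k+1) / real n"
    unfolding k_def using n0 by (auto simp: field_simps) linarith+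
  define c where "c = min b (real_of_int (k+1) / real n)"
  have "a < c" unfolding c_def using ab k1 by simp
  have c1: "c \<le> b" "c \<le> real_of_int (k+1) / real n" unfolding c_def by auto
  show ?thesis
    apply (rule exI[of _ "(a+c)/2"], rule exI[of _ "(c-a)/2"], rule exI[of _ k])
    using \<open>a < c\<close> k1 c1 by (auto simp: field_simps)
qed

lemma no_flat:
  assumes n: "n \<ge> 3" and ab: "a < b" and flat: "\<And>x. a \<le> x \<Longrightarrow> x \<le> b \<Longrightarrow> cmod (polyP n x - z) = c"
  shows False
proof -
  obtain x h k where xh: "h > 0" "a \<le> x - h" "x + h \<le> b" "real_of_int k / real n \<le> x - h"
     "x + h \<le> real_of_int (k+1) / real n"
    using exists_edge_sub[OF _ ab, of n] n by auto
  have "(cmod (polyP n (x - h) - z))^2 + (cmod (polyP n (x + h) - z))^2 > 2 * (cmod (polyP n x - z))^2"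
    using para[OF n xh(1,4,5)] .
  moreover have "cmod (polyP n (x - h) - z) = c" "cmod (polyP n (x + h) - z) = c" "cmod (polyP n x - z) = c"
    using xh by (auto intro!: flat)
  ultimately show False by simp
qed

lemma le_of_forall_lt:
  fixes A X R :: real
  assumes "A < R" and "\<And>r'. A < r' \<Longrightarrow> r' < R \<Longrightarrow> X < r'"
  shows "X \<le> A"
proof (rule ccontr)
  assume "\<not> X \<le> A"
  then have "A < (A + min X R)/2" "(A + min X R)/2 < R" using assms(1) by auto
  then have "X < (A + min X R)/2" using assms(2) by blast
  moreover have "(A + min X R)/2 < X" using \<open>\<not> X \<le> A\<close> by auto
  ultimately show False by simp
qed

definition Cyc :: "nat \<Rightarrow> real \<Rightarrow> bool" where
  "Cyc n r \<longleftrightarrow> (\<forall>a b c. a < b \<longrightarrow> b \<le> a + 1/2 \<longrightarrow> L n a b < r \<longrightarrow> a < c \<longrightarrow> c < b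
      \<longrightarrow> L n a c < r \<and> L n c b < r)"

lemma frac_small: "0 \<le> x \<Longrightarrow> x < 1 \<Longrightarrow> frac x = x" by simp

lemma frac_negsmall: "0 < x \<Longrightarrow> x < 1 \<Longrightarrow> frac (-x) = 1 - x"
  by (subst frac_unique_iff) auto

lemma cyc_Cyc:
  assumes n: "n \<ge> 4" and cy: "vr_cyclic n r"
  shows "Cyc n r"
  unfolding Cyc_def
proof (intro allI impI)
  fix a b c assume ab: "a < b" "b \<le> a + 1/2" and Lab: "L n a b < r" and ac: "a < c" "c < b"
  have n0: "n > 0" using n by simp
  have inP: "polyP n x \<in> Pn n" for x using Pn_range[OF n0] by simp
  have neq: "polyP n x \<noteq> polyP n y" if "0 < y - x" "y - x < 1" for x y
  proof
    assume "polyP n x = polyP n y"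
    then have "x - y \<in> \<int>" using polyP_eq_iff[OF n] by blast
    then obtain m where m: "x - y = real_of_int m" by (elim Ints_cases)
    then have "-1 < real_of_int m" "real_of_int m < 0" using that by linarith+
    then have "-1 < m" "m < 0" by linarith+
    then show False by simp
  qed
  have dPab: "dP n (polyP n a) (polyP n b) = b - a" using dP_polyP[OF n] ab by simp
  have dPba: "dP n (polyP n b) (polyP n a) = 1 - (b - a)" using dP_polyP[OF n] ab frac_negsmall[of "b - a"]
    by simp
  have e: "vr_edge n r (polyP n a) (polyP n b)"
  proof -
    have "polyP n a \<noteq> polyP n b" by (rule neq) (use ab in auto)
    moreover have "dP n (polyP n a) (polyP n b) \<le> dP n (polyP n b) (polyP n a)"
      unfolding dPab dPba using ab by simp
    ultimately show ?thesis unfolding vr_edge_def using inP Lab unfolding L_def by blast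
  qed
  have bt: "ccw_between n (polyP n a) (polyP n c) (polyP n b)"
  proof -
    have "polyP n a \<noteq> polyP n c" by (rule neq) (use ab ac in auto)
    moreover have "polyP n c \<noteq> polyP n b" by (rule neq) (use ab ac in auto)
    moreover have "dP n (polyP n a) (polyP n c) = c - a" using dP_polyP[OF n, of a c] ab ac by simp
    ultimately show ?thesis unfolding ccw_between_def using inP dPab ac by auto
  qed
  have "vr_edge n r (polyP n a) (polyP n c) \<and> vr_edge n r (polyP n c) (polyP n b)"
    using cy e bt unfolding vr_cyclic_def by blast
  then show "L n a c < r \<and> L n c b < r" unfolding vr_edge_def L_def by auto
qed




lemma not_Int_between: "real_of_int k < x \<Longrightarrow> x < real_of_int k + 1 \<Longrightarrow> x \<notin> \<int>"
proof
  assume "real_of_int k < x" "x < real_of_int k + 1" "x \<in> \<int>"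
  then obtain m where "x = real_of_int m" by (elim Ints_cases)
  with \<open>real_of_int k < x\<close> \<open>x < real_of_int k + 1\<close> have "k < m" "m < k + 1" by linarith+
  then show False by simp
qed

lemma CycD:
  assumes "Cyc n r" "a < b" "b \<le> a + 1/2" "L n a b < r" "a < c" "c < b"
  shows "L n a c < r" "L n c b < r"
  using assms unfolding Cyc_def by blast+

lemma no_local_max:
  assumes n: "n \<ge> 4" and lR: "L n s (s + 1/2) < R"
    and cyc: "\<And>r'. L n s (s + 1/2) < r' \<Longrightarrow> r' < R \<Longrightarrow> Cyc n r'"
    and ng: "real n * (s + 1/2) \<notin> \<int>"
  shows False
proof -
  have n0: "n > 0" using n by simp
  define b where "b = s + 1/2"
  define l where "l = L n s b"
  have le1: "L n s c \<le> l" if "s < c" "c < b" for c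
  proof (rule le_of_forall_lt[of l R])
    show "l < R" using lR unfolding l_def b_def .
    fix r' assume "l < r'" "r' < R"
    then have "Cyc n r'" using cyc[of r'] unfolding l_def b_def by blast
    moreover have "s < b" "b \<le> s + 1/2" unfolding b_def by simp_all
    moreover have "L n s b < r'" using \<open>l < r'\<close> unfolding l_def .
    ultimately show "L n s c < r'" using that by (rule CycD(1))
  qed
  have le2: "L n s c \<le> l" if "b < c" "c < s + 1" for c
  proof (rule le_of_forall_lt[of l R])
    show "l < R" using lR unfolding l_def b_def .
    fix r' assume "l < r'" "r' < R"
    then have "Cyc n r'" using cyc[of r'] unfolding l_def b_def by blast
    moreover have "L n b (s + 1) = l" unfolding l_def using L_per(1)[OF n0, of b s 1] L_sym[of n b s]
      by simp
    ultimately have "L n c (s + 1) < r'" using CycD(2)[of n r' b "s+1" c] that \<open>l < r'\<close> unfolding b_def by auto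
    then show "L n s c < r'" using L_per(1)[OF n0, of c s 1] L_sym[of n c s] by simp
  qed
  define k where "k = \<lfloor>real n * b\<rfloor>"
  have "real_of_int k \<le> real n * b" "real n * b < real_of_int k + 1" unfolding k_def by linarith+
  moreover have "real n * b \<noteq> real_of_int k"
  proof
    assume "real n * b = real_of_int k"
    then have "real n * b \<in> \<int>" by (simp only: Ints_of_int)
    then show False using ng unfolding b_def by blast
  qed
  ultimately have kb: "real_of_int k < real n * b" "real n * b < real_of_int k + 1" by linarith+
  define h where "h = min (min ((real n * b - real_of_int k) / real n) ((real_of_int k + 1 - real n * b) / real n)) (1/4)"
  have h0: "h > 0" unfolding h_def using kb n0 by auto
  have h1: "h \<le> (real n * b - real_of_int k) / real n" "h \<le> (real_of_int k + 1 - real n * b) / real n" "h \<le> 1/4"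
    unfolding h_def by (simp_all only: min.cobounded1 min.cobounded2 min.coboundedI1)
  have k1: "real_of_int k / real n \<le> b - h" using h1(1) n0 by (simp add: field_simps)
  have k2: "b + h \<le> real_of_int (k+1) / real n" using h1(2) n0 by (simp add: field_simps)
  have P: "(cmod (polyP n (b - h) - polyP n s))^2 + (cmod (polyP n (b + h) - polyP n s))^2
      > 2 * (cmod (polyP n b - polyP n s))^2"
    using para[OF _ h0 k1 k2] n by simp
  have "L n s (b - h) \<le> l" using le1[of "b - h"] h0 h1 unfolding b_def by simp
  moreover have "L n s (b + h) \<le> l" using le2[of "b + h"] h0 h1 unfolding b_def by simp
  moreover have "L n s b = l" unfolding l_def ..
  ultimately have "(L n s (b - h))^2 + (L n s (b + h))^2 \<le> 2 * (L n s b)^2"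
  proof -
    assume a1: "L n s (b - h) \<le> l" and a2: "L n s (b + h) \<le> l" and a3: "L n s b = l"
    have "(L n s (b - h))^2 \<le> l^2" by (rule power_mono[OF a1]) (simp add: L_def)
    moreover have "(L n s (b + h))^2 \<le> l^2" by (rule power_mono[OF a2]) (simp add: L_def)
    ultimately show ?thesis using a3 by simp
  qed
  then show False using P unfolding L_def by (simp add: norm_minus_commute)
qed




definition SS :: "nat \<Rightarrow> real set" where
  "SS n = {r. r \<ge> 0 \<and> (\<forall>r'. 0 < r' \<and> r' < r \<longrightarrow> vr_cyclic n r')}"

lemma rn_SS: "rn n = Sup (SS n)" unfolding rn_def SS_def ..

lemma SS_bound:
  assumes n: "n \<ge> 4" and r: "r \<in> SS n"
  shows "r \<le> L n (1/(4*real n) - 1/2) (1/(4*real n) - 1/2 + 1/2)"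
proof (rule ccontr)
  define s0 where "s0 = 1/(4*real n) - 1/2"
  assume "\<not> ?thesis"
  then have lr: "L n s0 (s0 + 1/2) < r" unfolding s0_def by simp
  have n0: "n > 0" using n by simp
  have eq: "real n * (s0 + 1/2) = 1/4" unfolding s0_def using n0 by simp
  have "(1/4::real) \<notin> \<int>" using not_Int_between[of 0 "1/4"] by simp
  then have ng: "real n * (s0 + 1/2) \<notin> \<int>" unfolding eq .
  show False
  proof (rule no_local_max[OF n lr _ ng])
    fix r' assume "L n s0 (s0 + 1/2) < r'" "r' < r"
    moreover have "0 \<le> L n s0 (s0 + 1/2)" unfolding L_def by simp
    ultimately have "0 < r'" "r' < r" by linarith+
    then show "Cyc n r'" using r cyc_Cyc[OF n] unfolding SS_def by blast
  qed
qed

lemma SS_bdd: "n \<ge> 4 \<Longrightarrow> bdd_above (SS n)"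
  using SS_bound unfolding bdd_above_def by blast

lemma SS_ne: "SS n \<noteq> {}"
proof -
  have "0 \<in> SS n" unfolding SS_def by auto
  then show ?thesis by blast
qed

lemma rn_Cyc:
  assumes n: "n \<ge> 4" and r: "0 < r" "r < rn n"
  shows "Cyc n r"
proof -
  obtain x where "x \<in> SS n" "r < x" using r(2) unfolding rn_SS less_cSup_iff[OF SS_ne SS_bdd[OF n]] by blast
  then have "vr_cyclic n r" using r(1) unfolding SS_def by blast
  then show ?thesis using cyc_Cyc[OF n] by blast
qed

lemma rn_half_ng:
  assumes n: "n \<ge> 4" and ng: "real n * (s + 1/2) \<notin> \<int>"
  shows "rn n \<le> L n s (s + 1/2)"
proof (rule ccontr)
  assume "\<not> ?thesis"
  then have lr: "L n s (s + 1/2) < rn n" by simp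
  show False
  proof (rule no_local_max[OF n lr _ ng])
    fix r' assume "L n s (s + 1/2) < r'" "r' < rn n"
    moreover have "0 \<le> L n s (s + 1/2)" unfolding L_def by simp
    ultimately show "Cyc n r'" using rn_Cyc[OF n] by simp
  qed
qed

lemma rn_half:
  assumes n: "n \<ge> 4"
  shows "rn n \<le> L n s (s + 1/2)"
proof (cases "real n * (s + 1/2) \<in> \<int>")
  case False
  then show ?thesis using rn_half_ng[OF n] by simp
next
  case True
  then obtain k where k: "real n * (s + 1/2) = real_of_int k" by (elim Ints_cases)
  have n0: "n > 0" using n by simp
  have c: "continuous_on UNIV (\<lambda>h. L n (s + h) (s + 1/2 + h))" by (rule L_cont_c[OF n0])
  then have "isCont (\<lambda>h. L n (s + h) (s + 1/2 + h)) 0"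
    by (simp add: continuous_on_eq_continuous_at)
  then have "((\<lambda>h. L n (s + h) (s + 1/2 + h)) \<longlongrightarrow> (\<lambda>h. L n (s + h) (s + 1/2 + h)) 0) (at 0)"
    unfolding isCont_def .
  then have "((\<lambda>h. L n (s + h) (s + 1/2 + h)) \<longlongrightarrow> L n s (s + 1/2)) (at 0)" by simp
  then have lim: "((\<lambda>h. L n (s + h) (s + 1/2 + h)) \<longlongrightarrow> L n s (s + 1/2)) (at_right 0)"
    by (rule filterlim_mono) (auto simp: at_within_le_at)
  have ev: "eventually (\<lambda>h. rn n \<le> L n (s + h) (s + 1/2 + h)) (at_right 0)"
  proof -
    have "eventually (\<lambda>h. h \<in> {0<..<1/real n}) (at_right (0::real))"
      by (rule eventually_at_right_real) (use n0 in simp)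
    moreover have "rn n \<le> L n (s + h) (s + 1/2 + h)" if "h \<in> {0<..<1/real n}" for h
    proof -
      have "real n * (s + h + 1/2) = real_of_int k + real n * h" using k by (simp add: algebra_simps)
      moreover have "0 < real n * h" "real n * h < 1" using that n0 by (auto simp: field_simps)
      ultimately have "real n * (s + h + 1/2) \<notin> \<int>" using not_Int_between[of k] by simp
      then show ?thesis using rn_half_ng[OF n, of "s + h"] by (simp add: algebra_simps)
    qed
    ultimately show ?thesis by (auto elim: eventually_mono)
  qed
  show ?thesis by (rule tendsto_lowerbound[OF lim ev]) simp
qed




definition tau :: "nat \<Rightarrow> real \<Rightarrow> real \<Rightarrow> real" where
  "tau n r s = Inf {t. 0 < t \<and> t < 1 \<and> L n s (s + t) = r}"

lemma tau_unique:
  assumes "0 < t0" "t0 < 1" "L n s (s + t0) = r" "\<And>t. 0 < t \<Longrightarrow> t < t0 \<Longrightarrow> L n s (s + t) \<noteq> r"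
  shows "tau n r s = t0"
  unfolding tau_def
proof (rule cInf_eq_minimum)
  show "t0 \<in> {t. 0 < t \<and> t < 1 \<and> L n s (s + t) = r}" using assms by simp
  fix x assume "x \<in> {t. 0 < t \<and> t < 1 \<and> L n s (s + t) = r}"
  then show "t0 \<le> x" using assms(4)[of x] by force
qed

lemma tau_props:
  assumes n: "n \<ge> 4" and r: "0 < r" "r \<le> rn n"
  shows "0 < tau n r s" "tau n r s \<le> 1/2" "L n s (s + tau n r s) = r"
    "\<And>t. 0 < t \<Longrightarrow> t < tau n r s \<Longrightarrow> L n s (s + t) < r"
proof -
  have n0: "n > 0" using n by simp
  define B where "B = {0..1/2} \<inter> {t. (\<lambda>t. r) t \<le> L n s (s + t)}"
  have cl: "closed B" unfolding B_def
    by (intro closed_Int closed_atLeastAtMost closed_Collect_le continuous_on_const L_cont_a[OF n0])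
  have "1/2 \<in> B" unfolding B_def using rn_half[OF n, of s] r by simp
  then have ne: "B \<noteq> {}" by blast
  have bb: "bdd_below B" unfolding B_def by (rule bdd_belowI[of _ 0]) auto
  define t0 where "t0 = Inf B"
  have t0B: "t0 \<in> B" unfolding t0_def by (rule closed_contains_Inf[OF ne bb cl])
  then have t0r: "0 \<le> t0" "t0 \<le> 1/2" "r \<le> L n s (s + t0)" unfolding B_def by auto
  have below: "L n s (s + t) < r" if "0 \<le> t" "t < t0" for t
  proof (rule ccontr)
    assume "\<not> ?thesis"
    then have "t \<in> B" unfolding B_def using that t0r by auto
    then have "t0 \<le> t" unfolding t0_def by (rule cInf_lower[OF _ bb])
    then show False using that by simp
  qed
  have "t0 \<noteq> 0"
  proof
    assume "t0 = 0"
    then show False using t0r r by (simp add: L_same)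
  qed
  then have t0p: "0 < t0" using t0r by simp
  obtain x where x: "0 \<le> x" "x \<le> t0" "L n s (s + x) = r"
    using IVT'[of "\<lambda>t. L n s (s + t)" 0 r t0] t0r r L_cont_a[OF n0, of "{0..t0}" s s]
    by (auto simp: L_same)
  have "x = t0" using below[of x] x by force
  then have Lt0: "L n s (s + t0) = r" using x by simp
  have tt: "tau n r s = t0"
    by (rule tau_unique) (use t0p t0r Lt0 below in \<open>auto simp: less_imp_neq\<close>)
  show "0 < tau n r s" "tau n r s \<le> 1/2" "L n s (s + tau n r s) = r" using tt t0p t0r Lt0 by auto
  show "\<And>t. 0 < t \<Longrightarrow> t < tau n r s \<Longrightarrow> L n s (s + t) < r" using below tt by simp
qed

lemma L_nonneg: "0 \<le> L n a b" unfolding L_def by simp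

lemma nest_le:
  assumes n: "n \<ge> 4" and ab: "a < b" "b \<le> a + 1/2" and Lab: "L n a b < rn n"
    and cd: "a \<le> c" "c < d" "d \<le> b"
  shows "L n c d \<le> L n a b"
proof (rule le_of_forall_lt[OF Lab])
  fix r' assume r': "L n a b < r'" "r' < rn n"
  then have cy: "Cyc n r'" using rn_Cyc[OF n] L_nonneg[of n a b] by simp
  show "L n c d < r'"
  proof (cases "c = a")
    case True
    show ?thesis
    proof (cases "d = b")
      case True
      then show ?thesis using \<open>c = a\<close> r' by simp
    next
      case False
      then show ?thesis using CycD(1)[OF cy ab r'(1), of d] cd \<open>c = a\<close> by simp
    qed
  next
    case False
    then have ca: "a < c" using cd by simp
    have cb: "L n c b < r'" using CycD(2)[OF cy ab r'(1), of c] ca cd by simp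
    show ?thesis
    proof (cases "d = b")
      case True
      then show ?thesis using cb by simp
    next
      case False
      have "c < b" "b \<le> c + 1/2" using cd ab ca by linarith+
      then show ?thesis using CycD(1)[OF cy _ _ cb, of d] cd False by simp
    qed
  qed
qed

lemma L_lim_left: assumes "n > 0" shows "((\<lambda>t. L n x t) \<longlongrightarrow> L n x b) (at_left b)"
proof -
  have "isCont (\<lambda>t. L n x t) b"
    using L_cont_d[OF assms, of UNIV x] by (simp add: continuous_on_eq_continuous_at)
  then have "((\<lambda>t. L n x t) \<longlongrightarrow> L n x b) (at b)" unfolding isCont_def .
  then show ?thesis by (rule filterlim_mono) (auto simp: at_within_le_at)
qed

lemma chord_lt:
  assumes n: "n \<ge> 4" and r: "0 < r" "r \<le> rn n"
    and cd: "s \<le> c" "c < d" "d \<le> s + tau n r s" and nf: "\<not> (c = s \<and> d = s + tau n r s)"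
  shows "L n c d < r"
proof -
  have n0: "n > 0" using n by simp
  have tp: "0 < tau n r s" "tau n r s \<le> 1/2" "L n s (s + tau n r s) = r"
    "\<And>t. 0 < t \<Longrightarrow> t < tau n r s \<Longrightarrow> L n s (s + t) < r"
    using tau_props[OF n r] by blast+
  define b where "b = s + tau n r s"
  have lt_b: "L n s t < r" if "s < t" "t < b" for t
    using tp(4)[of "t - s"] that unfolding b_def by simp
  show ?thesis
  proof (cases "d < b")
    case True
    have "L n s d < r" using lt_b[of d] True cd by simp
    moreover have "L n c d \<le> L n s d"
      by (rule nest_le[OF n]) (use cd True tp(2) \<open>L n s d < r\<close> r in \<open>auto simp: b_def\<close>)
    ultimately show ?thesis by simp
  next
    case False
    then have db: "d = b" using cd unfolding b_def by simp
    then have cs: "s < c" using nf cd unfolding b_def by auto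
    have mono: "L n x2 b \<le> L n x1 b" if "s \<le> x1" "x1 < x2" "x2 < b" for x1 x2
    proof (rule tendsto_le[OF _ L_lim_left[OF n0] L_lim_left[OF n0]])
      show "at_left b \<noteq> bot" by simp
      have "eventually (\<lambda>t. t \<in> {x2<..<b}) (at_left b)" by (rule eventually_at_left_real) (use that in simp)
      moreover have "L n x2 t \<le> L n x1 t" if "t \<in> {x2<..<b}" for t
      proof -
        have t: "x2 < t" "t < b" using that by auto
        have Lst: "L n s t < r" using lt_b[of t] t \<open>s \<le> x1\<close> \<open>x1 < x2\<close> by simp
        have "L n x1 t \<le> L n s t"
        proof (cases "x1 = s")
          case False
          show ?thesis
            by (rule nest_le[OF n]) (use t \<open>s \<le> x1\<close> \<open>x1 < x2\<close> tp(2) Lst r False in \<open>auto simp: b_def\<close>)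
        qed simp
        then have "L n x1 t < rn n" using Lst r by simp
        then show ?thesis
          by (intro nest_le[OF n]) (use t \<open>s \<le> x1\<close> \<open>x1 < x2\<close> tp(2) in \<open>auto simp: b_def\<close>)
      qed
      ultimately show "eventually (\<lambda>t. L n x2 t \<le> L n x1 t) (at_left b)" by (auto elim: eventually_mono)
    qed
    show ?thesis
    proof (rule ccontr)
      assume "\<not> ?thesis"
      then have rc: "r \<le> L n c b" using db by simp
      have Lsb: "L n s b = r" using tp(3) unfolding b_def .
      have "cmod (polyP n x - polyP n b) = r" if "s \<le> x" "x \<le> c" for x
      proof -
        have "L n x b \<le> r"
        proof (cases "x = s")
          case False then show ?thesis using mono[of s x] that cs cd db Lsb by simp
        qed (use Lsb in simp)
        moreover have "L n c b \<le> L n x b"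
        proof (cases "x = c")
          case False then show ?thesis using mono[of x c] that cs cd db by simp
        qed simp
        ultimately show ?thesis using rc unfolding L_def by simp
      qed
      then show False using no_flat[of n s c "polyP n b" r] n cs by simp
    qed
  qed
qed




lemma tau_shift:
  assumes n0: "n > 0"
  shows "tau n r (s + real_of_int j / real n) = tau n r s"
proof -
  have "L n (s + real_of_int j / real n) (s + real_of_int j / real n + t) = L n s (s + t)" for t
    using L_shift[OF n0, of s j "s + t"] by (simp add: algebra_simps)
  then show ?thesis unfolding tau_def by simp
qed

lemma tau_per:
  assumes n0: "n > 0"
  shows "tau n r (s + real_of_int m) = tau n r s"
  using tau_shift[OF n0, of r s "m * int n"] n0 by simp

lemma F_mono:
  assumes n: "n \<ge> 4" and r: "0 < r" "r \<le> rn n" and ss: "s < s'"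
  shows "s + tau n r s < s' + tau n r s'"
proof (cases "s + tau n r s \<le> s'")
  case True
  then show ?thesis using tau_props(1)[OF n r, of s'] by simp
next
  case False
  show ?thesis
  proof (rule ccontr)
    assume "\<not> ?thesis"
    then have le: "s' + tau n r s' \<le> s + tau n r s" by simp
    have "L n s' (s' + tau n r s') < r"
      by (rule chord_lt[OF n r, of s]) (use ss le tau_props(1)[OF n r, of s'] in auto)
    then show False using tau_props(3)[OF n r, of s'] by simp
  qed
qed

lemma F_refl:
  assumes n: "n \<ge> 4" and r: "0 < r" "r \<le> rn n"
  shows "tau n r (real_of_int j / real n - (s + tau n r s)) = tau n r s"
proof -
  have n0: "n > 0" using n by simp
  define c where "c = real_of_int j / real n"
  define T where "T = tau n r s"
  have Tp: "0 < T" "T \<le> 1/2" "L n s (s + T) = r" using tau_props[OF n r] unfolding T_def by auto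
  show ?thesis unfolding c_def[symmetric] T_def[symmetric]
  proof (rule tau_unique)
    show "0 < T" "T < 1" using Tp by auto
    have "L n (c - (s + T)) (c - (s + T) + T) = L n (c - (s + T)) (c - s)" by simp
    also have "\<dots> = L n (s + T) s" unfolding c_def by (rule L_refl[OF n0])
    finally show "L n (c - (s + T)) (c - (s + T) + T) = r" using Tp L_sym[of n "s + T" s] by simp
    fix t assume t: "0 < t" "t < T"
    have "c - (s + T) + t = c - (s + T - t)" by simp
    then have "L n (c - (s + T)) (c - (s + T) + t) = L n (c - (s + T)) (c - (s + T - t))"
      by (rule arg_cong[where f="L n (c - (s + T))"])
    also have "\<dots> = L n (s + T) (s + T - t)" unfolding c_def by (rule L_refl[OF n0])
    also have "\<dots> = L n (s + T - t) (s + T)" by (rule L_sym)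
    also have "\<dots> < r"
      by (rule chord_lt[OF n r, of s]) (use t in \<open>auto simp: T_def\<close>)
    finally show "L n (c - (s + T)) (c - (s + T) + t) \<noteq> r" by simp
  qed
qed

lemma g_r_polyP:
  assumes n: "n \<ge> 4"
  shows "g_r n r (polyP n s) = polyP n (s + tau n r s)"
proof -
  have n0: "n > 0" using n by simp
  have e: "polyP n (frac s + t) = polyP n (s + t)" for t
  proof -
    have "polyP n (frac s + t) = polyP n ((s + t) + real_of_int (- \<lfloor>s\<rfloor>))"
      by (rule arg_cong[where f="polyP n"]) (simp add: frac_def)
    also have "\<dots> = polyP n (s + t)" by (rule polyP_periodic[OF n0])
    finally show ?thesis .
  qed
  have "{t. 0 < t \<and> t < 1 \<and> cmod (polyP n s - polyP n (param n (polyP n s) + t)) = r}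
      = {t. 0 < t \<and> t < 1 \<and> L n s (s + t) = r}"
    unfolding param_polyP[OF n] e L_def ..
  then show ?thesis unfolding g_r_def param_polyP[OF n] e by (simp add: tau_def)
qed

lemma tau_lim:
  assumes n: "n \<ge> 4" and rn0: "0 < rn n"
  shows "((\<lambda>r'. tau n r' s) \<longlongrightarrow> tau n (rn n) s) (at_left (rn n))"
proof -
  have n0: "n > 0" using n by simp
  define T where "T = tau n (rn n) s"
  have r: "0 < rn n" "rn n \<le> rn n" using rn0 by auto
  have Tp: "0 < T" "T \<le> 1/2" "L n s (s + T) = rn n" "\<And>t. 0 < t \<Longrightarrow> t < T \<Longrightarrow> L n s (s + t) < rn n"
    using tau_props[OF n r] unfolding T_def by blast+
  show ?thesis unfolding T_def[symmetric] tendsto_iff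
  proof (intro allI impI)
    fix e :: real assume e: "e > 0"
    define e' where "e' = min e (T/2)"
    define te where "te = T - e'"
    have te: "0 < te" "te < T" "T - te \<le> e" unfolding te_def e'_def using e Tp(1) by auto
    define l where "l = L n s (s + te)"
    have l: "l < rn n" unfolding l_def using Tp(4)[OF te(1,2)] .
    define b0 where "b0 = max l 0"
    have "b0 < rn n" unfolding b0_def using l rn0 by simp
    then have ev: "eventually (\<lambda>r'. r' \<in> {b0<..<rn n}) (at_left (rn n))" by (rule eventually_at_left_real)
    show "eventually (\<lambda>r'. dist (tau n r' s) T < e) (at_left (rn n))"
    proof (rule eventually_mono[OF ev])
      fix r' assume "r' \<in> {b0<..<rn n}"
      then have r': "l < r'" "0 < r'" "r' < rn n" unfolding b0_def by auto
      have r'' : "0 < r'" "r' \<le> rn n" using r' by auto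
      define T' where "T' = tau n r' s"
      have T'p: "0 < T'" "T' \<le> 1/2" "L n s (s + T') = r'" "\<And>t. 0 < t \<Longrightarrow> t < T' \<Longrightarrow> L n s (s + t) < r'"
        using tau_props[OF n r''] unfolding T'_def by blast+
      obtain x where x: "0 \<le> x" "x \<le> T" "L n s (s + x) = r'"
        using IVT'[of "\<lambda>t. L n s (s + t)" 0 r' T] Tp r' L_cont_a[OF n0, of "{0..T}" s s]
        by (auto simp: L_same)
      have "x \<noteq> 0" using x r' by (auto simp: L_same)
      then have "T' \<le> x" using T'p(4)[of x] x by force
      then have T'T: "T' \<le> T" using x by simp
      have "te < T'"
      proof (rule ccontr)
        assume "\<not> te < T'"
        then have "L n s (s + T') \<le> L n s (s + te)"
          by (intro nest_le[OF n]) (use te Tp(2) T'p(1) l in \<open>auto simp: l_def\<close>)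
        then show False using T'p(3) r' unfolding l_def by simp
      qed
      then show "dist (tau n r' s) T < e" unfolding T'_def[symmetric] dist_real_def using T'T te by auto
    qed
  qed
qed

lemma g_polyP:
  assumes n: "n \<ge> 4" and r: "0 < r" "r \<le> rn n"
  shows "g n r (polyP n s) = polyP n (s + tau n r s)"
proof (cases "r < rn n")
  case True
  then show ?thesis unfolding g_def using g_r_polyP[OF n] by simp
next
  case False
  then have rr: "r = rn n" using r by simp
  have n0: "n > 0" using n by simp
  have "((\<lambda>r'. s + tau n r' s) \<longlongrightarrow> s + tau n (rn n) s) (at_left (rn n))"
    by (intro tendsto_intros tau_lim[OF n]) (use r rr in simp)
  then have "((\<lambda>r'. polyP n (s + tau n r' s)) \<longlongrightarrow> polyP n (s + tau n (rn n) s)) (at_left (rn n))"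
    by (rule isCont_tendsto_compose[rotated])
       (use polyP_cont[OF n0] in \<open>simp add: continuous_on_eq_continuous_at\<close>)
  then have "Lim (at_left (rn n)) (\<lambda>r'. g_r n r' (polyP n s)) = polyP n (s + tau n (rn n) s)"
    unfolding g_r_polyP[OF n] by (intro tendsto_Lim) simp_all
  then show ?thesis unfolding g_def rr by simp
qed




definition ongrid :: "nat \<Rightarrow> real \<Rightarrow> bool" where
  "ongrid n w \<longleftrightarrow> (\<exists>j::int. w = real_of_int j / real n)"

lemma ongrid_add: "ongrid n a \<Longrightarrow> ongrid n b \<Longrightarrow> ongrid n (a + b)"
proof -
  assume "ongrid n a" "ongrid n b"
  then obtain i j where "a = real_of_int i / real n" "b = real_of_int j / real n" unfolding ongrid_def by blast
  then have "a + b = real_of_int (i + j) / real n" by (simp add: add_divide_distrib)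
  then show ?thesis unfolding ongrid_def by blast
qed

lemma ongrid_diff: "ongrid n a \<Longrightarrow> ongrid n b \<Longrightarrow> ongrid n (a - b)"
proof -
  assume "ongrid n a" "ongrid n b"
  then obtain i j where "a = real_of_int i / real n" "b = real_of_int j / real n" unfolding ongrid_def by blast
  then have "a - b = real_of_int (i - j) / real n" by (simp add: diff_divide_distrib)
  then show ?thesis unfolding ongrid_def by blast
qed

lemma ongrid_mult: "ongrid n a \<Longrightarrow> ongrid n (real_of_int m * a)"
proof -
  assume "ongrid n a"
  then obtain j where "a = real_of_int j / real n" unfolding ongrid_def by blast
  then have "real_of_int m * a = real_of_int (m * j) / real n" by simp
  then show ?thesis unfolding ongrid_def by blast
qed

lemma ongrid_int: "n > 0 \<Longrightarrow> ongrid n (real_of_int m)"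
  unfolding ongrid_def by (rule exI[of _ "m * int n"]) simp

lemma ongrid_inv: "n > 0 \<Longrightarrow> d dvd n \<Longrightarrow> ongrid n (1 / real d)"
proof -
  assume n0: "n > 0" and "d dvd n"
  then obtain e where e: "n = d * e" by blast
  then have "d > 0" "e > 0" using n0 by auto
  then have "1 / real d = real_of_int (int e) / real n" unfolding e by (simp add: field_simps)
  then show ?thesis unfolding ongrid_def by blast
qed

locale circ =
  fixes F :: "real \<Rightarrow> real" and n :: nat
  assumes n0: "n > 0"
    and mono: "\<And>x y. x < y \<Longrightarrow> F x < F y"
    and sh: "\<And>x j. F (x + real_of_int j / real n) = F x + real_of_int j / real n"
    and Frefl: "\<And>x j. F (real_of_int j / real n - F x) = real_of_int j / real n - x"
begin

lemma F_sh: "ongrid n w \<Longrightarrow> F (x + w) = F x + w"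
  unfolding ongrid_def using sh by auto

lemma Fp_sh: "ongrid n w \<Longrightarrow> (F^^k) (x + w) = (F^^k) x + w"
  by (induction k) (auto simp: F_sh)

lemma Fp_int: "(F^^k) (x + real_of_int m) = (F^^k) x + real_of_int m"
  by (rule Fp_sh[OF ongrid_int[OF n0]])

lemma Fp_mono: "x < y \<Longrightarrow> (F^^k) x < (F^^k) y"
  by (induction k) (auto intro: mono)

lemma Fp_refl: "ongrid n c \<Longrightarrow> (F^^k) (c - (F^^k) x) = c - x"
proof (induction k)
  case 0 then show ?case by simp
next
  case (Suc k)
  obtain j where c: "c = real_of_int j / real n" using Suc.prems unfolding ongrid_def by blast
  have e1: "(F^^Suc k) z = (F^^k) (F z)" for z by (simp only: funpow_Suc_right comp_def)
  have e2: "(F^^Suc k) x = F ((F^^k) x)" by simp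
  have "(F^^Suc k) (c - (F^^Suc k) x) = (F^^k) (F (c - F ((F^^k) x)))"
    unfolding e2 e1[of "c - F ((F^^k) x)"] ..
  also have "F (c - F ((F^^k) x)) = c - (F^^k) x" unfolding c by (rule Frefl)
  finally show ?case using Suc by simp
qed

lemma Fp_qm:
  assumes per: "(F^^q) x = x + real l"
  shows "(F^^(q*m)) x = x + real m * real l"
proof (induction m)
  case 0 then show ?case by simp
next
  case (Suc m)
  have "(F^^(q * Suc m)) x = (F^^q) ((F^^(q*m)) x)" by (simp add: funpow_add)
  also have "\<dots> = (F^^q) (x + real_of_int (int (m * l)))" using Suc by simp
  also have "\<dots> = x + real l + real_of_int (int (m * l))" unfolding Fp_int per ..
  finally show ?case by (simp add: algebra_simps)
qed

lemma upper:
  assumes per: "(F^^q) x = x + real l"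
    and xy: "(F^^k) x = y + real_of_int \<beta>"
    and gy: "ongrid n (2*y)" and gx: "ongrid n (2*x)"
  shows "real q * (y - x) \<in> \<int>"
proof -
  have r1: "(F^^k) y - real_of_int \<beta> = 2*y - x"
  proof -
    have "(F^^k) (2*y - (F^^k) x) = 2*y - x" by (rule Fp_refl[OF gy])
    moreover have "2*y - (F^^k) x = y + real_of_int (-\<beta>)" using xy by simp
    moreover have "(F^^k) (y + real_of_int (-\<beta>)) = (F^^k) y + real_of_int (-\<beta>)" by (rule Fp_int)
    ultimately show ?thesis by simp
  qed
  have gw: "ongrid n (2 * (y - x))" using ongrid_diff[OF gy gx] by (simp add: algebra_simps)
  have H: "(F^^(2*k*m)) x - 2 * real m * real_of_int \<beta> = x + 2 * real m * (y - x)" for m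
  proof (induction m)
    case 0 then show ?case by simp
  next
    case (Suc m)
    have gm: "ongrid n (2 * real m * (y - x))"
      using ongrid_mult[OF gw, of "int m"] by (simp add: algebra_simps)
    have "(F^^(2*k*Suc m)) x = (F^^(2*k)) ((F^^(2*k*m)) x)" by (simp add: funpow_add algebra_simps)
    also have "(F^^(2*k*m)) x = (x + 2 * real m * (y - x)) + real_of_int (2 * int m * \<beta>)"
      using Suc by simp
    also have "(F^^(2*k)) \<dots> = (F^^(2*k)) x + 2 * real m * (y - x) + real_of_int (2 * int m * \<beta>)"
      unfolding Fp_int Fp_sh[OF gm] ..
    also have "(F^^(2*k)) x = (F^^k) ((F^^k) x)" by (simp add: funpow_add mult_2)
    also have "\<dots> = (F^^k) y + real_of_int \<beta>" unfolding xy Fp_int ..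
    finally show ?case using r1 by (simp add: algebra_simps)
  qed
  have "(F^^(2*k*q)) x = (F^^(q*(2*k))) x" by (simp add: ac_simps)
  also have "\<dots> = x + real (2*k) * real l" by (rule Fp_qm[OF per])
  finally have "x + real (2*k) * real l - 2 * real q * real_of_int \<beta> = x + 2 * real q * (y - x)"
    using H[of q] by simp
  then have "real q * (y - x) = real_of_int (int k * int l - int q * \<beta>)" by (simp add: algebra_simps)
  then show ?thesis by simp
qed

lemma lower:
  assumes per: "(F^^q) x = x + real l" and cop: "coprime l q" and q0: "q > 0"
    and dq: "d dvd q" and dn: "d dvd n" and d0: "d > 0"
  shows "\<exists>k::nat. \<exists>\<beta>::int. \<forall>c::nat. (F^^(k*c)) x - real c * real_of_int \<beta> = x + real c / real d"
proof -
  define q' where "q' = q div d"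
  have qq: "q = d * q'" unfolding q'_def using dq by simp
  have "coprime (int l) (int q)" using cop by simp
  then obtain u v where uv: "u * int l + v * int q = 1" using bezout_int[of "int l" "int q"] by auto
  define D where "D = (u * int q') div int q"
  define k0 where "k0 = (u * int q') mod int q"
  have k0: "0 \<le> k0" unfolding k0_def using q0 by simp
  have ud: "u * int q' = int q * D + k0" unfolding D_def k0_def by simp
  define \<beta> where "\<beta> = - v * int q' - D * int l"
  define k where "k = nat k0"
  have kb: "int k * int l - int q * \<beta> = int q'"
  proof -
    have "int k * int l = (u * int q' - int q * D) * int l" unfolding k_def using k0 ud by simp
    also have "\<dots> = (u * int l) * int q' - int q * D * int l" by (simp add: algebra_simps)
    also have "u * int l = 1 - v * int q" using uv by simp
    finally show ?thesis unfolding \<beta>_def by (simp add: algebra_simps)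
  qed
  have gd: "ongrid n (1 / real d)" by (rule ongrid_inv[OF n0 dn])
  define G where "G z = (F^^k) z - real_of_int \<beta> - 1 / real d" for z
  have Gm: "G a < G b" if "a < b" for a b unfolding G_def using Fp_mono[OF that] by simp
  define K where "K m = (F^^(k*m)) x - real m * real_of_int \<beta> - real m / real d" for m
  have gK: "ongrid n (real_of_int (int m * \<beta>) + real m / real d)" for m
  proof -
    have a: "ongrid n (real_of_int (int m) * (1 / real d))" by (rule ongrid_mult[OF gd])
    have "ongrid n (real_of_int (int m * \<beta>) + real_of_int (int m) * (1 / real d))"
      by (rule ongrid_add[OF ongrid_int[OF n0] a])
    then show ?thesis by simp
  qed
  have KS: "K (Suc m) = G (K m)" for m
  proof -
    have "(F^^(k * Suc m)) x = (F^^k) ((F^^(k*m)) x)" by (simp add: funpow_add)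
    also have "(F^^(k*m)) x = K m + (real_of_int (int m * \<beta>) + real m / real d)" unfolding K_def by simp
    also have "(F^^k) \<dots> = (F^^k) (K m) + (real_of_int (int m * \<beta>) + real m / real d)"
      by (rule Fp_sh[OF gK])
    finally show ?thesis unfolding K_def G_def by (simp add: algebra_simps add_divide_distrib)
  qed
  have K0: "K 0 = x" unfolding K_def by simp
  have Kd: "K d = x"
  proof -
    have "int q dvd int (k*d) * int l"
    proof -
      have "int (k*d) * int l = int d * (int k * int l)" by simp
      also have "\<dots> = int q * (1 + int d * \<beta>)" using kb qq by (simp add: algebra_simps)
      finally show ?thesis by simp
    qed
    then have "int q dvd int (k*d)" using \<open>coprime (int l) (int q)\<close>
      by (metis coprime_commute coprime_dvd_mult_left_iff)
    then obtain e where e: "k * d = q * e" by (metis dvd_def of_nat_dvd_iff)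
    have el: "int e * int l = 1 + int d * \<beta>"
    proof -
      have "int q * (int e * int l) = int (k*d) * int l" using e by (simp add: algebra_simps)
      also have "\<dots> = int q * (1 + int d * \<beta>)" using kb qq by (simp add: algebra_simps)
      finally show ?thesis using q0 by simp
    qed
    then have elr: "real e * real l = 1 + real d * real_of_int \<beta>" by (metis of_int_of_nat_eq of_int_mult of_int_add of_int_1)
    have "(F^^(k*d)) x = x + real e * real l" unfolding e by (rule Fp_qm[OF per])
    then show ?thesis unfolding K_def elr using d0 by simp
  qed
  have Gx: "G x = x"
  proof (rule ccontr)
    assume "G x \<noteq> x"
    then consider "x < G x" | "G x < x" by linarith
    then show False
    proof cases
      case 1
      have "K m < K (Suc m)" for m
      proof (induction m)
        case 0 then show ?case using 1 KS[of 0] K0 by simp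
      next
        case (Suc m) then show ?case using KS[of m] KS[of "Suc m"] Gm by simp
      qed
      then have "K 0 < K (Suc m)" for m by (induction m) (auto intro: less_trans)
      then have "K 0 < K d" using d0 by (metis Suc_pred)
      then show False using K0 Kd by simp
    next
      case 2
      have "K (Suc m) < K m" for m
      proof (induction m)
        case 0 then show ?case using 2 KS[of 0] K0 by simp
      next
        case (Suc m) then show ?case using KS[of m] KS[of "Suc m"] Gm by simp
      qed
      then have "K (Suc m) < K 0" for m by (induction m) (auto intro: less_trans)
      then have "K d < K 0" using d0 by (metis Suc_pred)
      then show False using K0 Kd by simp
    qed
  qed
  have "K c = x" for c by (induction c) (auto simp: K0 KS Gx)
  then show ?thesis unfolding K_def by (intro exI[of _ k] exI[of _ \<beta>]) (auto simp: algebra_simps)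
qed

end




lemma nt_gcd:
  assumes q: "odd q" and A: "real q * D \<in> \<int>" and B: "real (2*n) * D \<in> \<int>"
  shows "\<exists>m::int. D = real_of_int m / real (gcd n q)"
proof -
  have "coprime q 2" using q by simp
  then have g: "gcd q (2*n) = gcd q n" by (simp add: gcd_mult_right_left_cancel)
  obtain a b where ab: "a * int q + b * int (2*n) = gcd (int q) (int (2*n))" using bezout_int by blast
  have ab1: "a * int q + b * int (2*n) = int (gcd q n)" using ab unfolding gcd_int_int_eq g .
  have ab': "a * int q + b * int (2*n) = int (gcd n q)" using ab1 by (simp only: gcd.commute)
  obtain x where x: "real q * D = real_of_int x" using A by (elim Ints_cases)
  obtain y where y: "real (2*n) * D = real_of_int y" using B by (elim Ints_cases)
  have "real (gcd n q) = real_of_int (int (gcd n q))" by simp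
  also have "\<dots> = real_of_int (a * int q + b * int (2*n))" unfolding ab' ..
  finally have "real (gcd n q) * D = real_of_int (a * int q + b * int (2*n)) * D" by simp
  also have "\<dots> = real_of_int a * (real q * D) + real_of_int b * (real (2*n) * D)" by (simp add: algebra_simps)
  also have "\<dots> = real_of_int (a * x + b * y)" using x y by simp
  finally have e: "real (gcd n q) * D = real_of_int (a * x + b * y)" .
  have "q \<noteq> 0" using odd_pos[OF q] by simp
  then have "gcd n q > 0" by simp
  then show ?thesis using e by (intro exI[of _ "a * x + b * y"]) (simp add: field_simps)
qed

theorem lemma5p13:
  fixes n l :: nat and r :: real and u :: "nat \<Rightarrow> complex"
  assumes "l \<ge> 1" and "n \<ge> 4 * l + 2"
    and "equilateral_star n l r u"
  shows "card ({u i | i. i < 2*l+1} \<inter> (vertices n \<union> midpoints n)) = 0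
       \<or> card ({u i | i. i < 2*l+1} \<inter> (vertices n \<union> midpoints n)) = gcd n (2*l+1)"
proof -
  define q where "q = 2*l+1"
  have n: "n \<ge> 4" using assms(1,2) by simp
  have n0: "n > 0" using n by simp
  have q0: "q > 0" unfolding q_def by simp
  have st0: "0 < r \<and> r \<le> rn n \<and> (\<forall>i < q. u i \<in> Pn n)
      \<and> (\<forall>i < q. u ((i + 1) mod q) = g n r (u i))
      \<and> (\<Sum>i < q. dP n (u i) (u ((i + 1) mod q))) = real l"
    using assms(3) unfolding equilateral_star_def q_def[symmetric] .
  have st: "0 < r" "r \<le> rn n" "\<And>i. i < q \<Longrightarrow> u i \<in> Pn n"
    "\<And>i. i < q \<Longrightarrow> u ((i + 1) mod q) = g n r (u i)"
    "(\<Sum>i < q. dP n (u i) (u ((i + 1) mod q))) = real l"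
    using st0 by blast+
  have rr: "0 < r" "r \<le> rn n" using st by auto
  define F where "F s = s + tau n r s" for s
  interpret circ F n
  proof
    show "n > 0" by (rule n0)
    show "F x < F y" if "x < y" for x y unfolding F_def by (rule F_mono[OF n rr that])
    show "F (x + real_of_int j / real n) = F x + real_of_int j / real n" for x j
      unfolding F_def tau_shift[OF n0] by simp
    show "F (real_of_int j / real n - F x) = real_of_int j / real n - x" for x j
      unfolding F_def using F_refl[OF n rr, of j x] by simp
  qed
  obtain s0 where s0: "u 0 = polyP n s0" using st(3)[OF q0] Pn_range[OF n0] by auto
  define t where "t i = (F^^i) s0" for i
  have tS: "t (Suc i) = F (t i)" for i unfolding t_def by simp
  have gt: "g n r (polyP n (t i)) = polyP n (t (Suc i))" for i
    unfolding tS F_def by (rule g_polyP[OF n rr])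
  have ut: "u i = polyP n (t i)" if "i < q" for i
    using that
  proof (induction i)
    case 0 then show ?case using s0 unfolding t_def by simp
  next
    case (Suc i)
    then have "u (Suc i) = u ((i + 1) mod q)" by simp
    also have "\<dots> = g n r (u i)" using st(4)[of i] Suc by simp
    finally show ?case using Suc gt by simp
  qed
  have ut2: "u ((i + 1) mod q) = polyP n (t (Suc i))" if "i < q" for i
    using st(4)[OF that] ut[OF that] gt by simp
  have tau_b: "0 < tau n r s" "tau n r s < 1" for s using tau_props[OF n rr, of s] by auto
  have "dP n (u i) (u ((i + 1) mod q)) = t (Suc i) - t i" if "i < q" for i
  proof -
    have "dP n (u i) (u ((i + 1) mod q)) = frac (t (Suc i) - t i)"
      unfolding ut[OF that] ut2[OF that] dP_polyP[OF n] ..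
    also have "t (Suc i) - t i = tau n r (t i)" unfolding tS F_def by simp
    finally show ?thesis using tau_b[of "t i"] unfolding tS F_def by simp
  qed
  then have "(\<Sum>i < q. t (Suc i) - t i) = real l" using st(5) by simp
  moreover have "(\<Sum>i < q. t (Suc i) - t i) = t q - t 0" by (rule sum_lessThan_telescope)
  ultimately have per0: "(F^^q) s0 = s0 + real l" unfolding t_def by simp
  have perx: "(F^^q) (t a) = t a + real l" for a
  proof -
    have "(F^^q) (t a) = (F^^(q + a)) s0" unfolding t_def by (simp add: funpow_add)
    also have "\<dots> = (F^^(a + q)) s0" by (simp add: add.commute)
    also have "\<dots> = (F^^a) ((F^^q) s0)" by (simp add: funpow_add)
    also have "\<dots> = (F^^a) (s0 + real_of_int (int l))" using per0 by simp
    also have "\<dots> = t a + real l" unfolding Fp_int t_def by simp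
    finally show ?thesis .
  qed
  have tN: "(F^^N) s0 = t (N mod q) + real (N div q) * real l" for N
  proof -
    have NN: "N = N mod q + q * (N div q)" by simp
    have "(F^^N) s0 = (F^^(N mod q + q * (N div q))) s0" using NN by (rule arg_cong)
    also have "\<dots> = (F^^(N mod q)) ((F^^(q * (N div q))) s0)" by (simp only: funpow_add comp_def)
    finally have "(F^^N) s0 = (F^^(N mod q)) ((F^^(q * (N div q))) s0)" .
    also have "(F^^(q * (N div q))) s0 = s0 + real_of_int (int (N div q * l))"
      using Fp_qm[OF per0] by simp
    also have "(F^^(N mod q)) \<dots> = t (N mod q) + real (N div q) * real l" unfolding Fp_int t_def by simp
    finally show ?thesis .
  qed
  define A where "A = {u i | i. i < 2*l+1} \<inter> (vertices n \<union> midpoints n)"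
  have Achar: "x \<in> A \<longleftrightarrow> (\<exists>i<q. x = polyP n (t i) \<and> real (2*n) * t i \<in> \<int>)" for x
  proof
    assume "x \<in> A"
    then obtain i where i: "i < q" "x = u i" "x \<in> vertices n \<union> midpoints n"
      unfolding A_def q_def[symmetric] by blast
    then have "x = polyP n (t i)" using ut by simp
    then show "\<exists>i<q. x = polyP n (t i) \<and> real (2*n) * t i \<in> \<int>" using i VM_iff[OF n] by blast
  next
    assume "\<exists>i<q. x = polyP n (t i) \<and> real (2*n) * t i \<in> \<int>"
    then obtain i where i: "i < q" "x = polyP n (t i)" "real (2*n) * t i \<in> \<int>" by blast
    then have "x = u i" using ut by simp
    moreover have "x \<in> vertices n \<union> midpoints n" using i VM_iff[OF n] by blast
    ultimately show "x \<in> A" unfolding A_def q_def[symmetric] using i(1) by blast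
  qed
  show ?thesis
  proof (cases "A = {}")
    case True
    then show ?thesis unfolding A_def by simp
  next
    case False
    then obtain a where a: "a < q" "real (2*n) * t a \<in> \<int>" using Achar by blast
    define d where "d = gcd n q"
    have d0: "d > 0" unfolding d_def using n0 by simp
    have dn: "d dvd n" "d dvd q" unfolding d_def by auto
    have "gcd l (2*l+1) = 1" using gcd_add_mult[of l 2 1] by simp
    then have cop: "coprime l q" unfolding q_def by (simp add: coprime_iff_gcd_eq_1)
    obtain k \<beta> where kb: "\<And>c::nat. (F^^(k*c)) (t a) - real c * real_of_int \<beta> = t a + real c / real d"
      using lower[OF perx cop q0 dn(2) dn(1) d0] by blast
    have gx: "ongrid n (2 * t a)"
    proof -
      obtain J where J: "real (2*n) * t a = real_of_int J" using a(2) by (elim Ints_cases)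
      then have "2 * t a = real_of_int J / real n" using n0 by (simp add: field_simps)
      then show ?thesis unfolding ongrid_def by blast
    qed
    have Aeq: "A = (\<lambda>c. polyP n (t a + real c / real d)) ` {..<d}"
    proof (intro set_eqI iffI)
      fix x assume "x \<in> A"
      then obtain i where i: "i < q" "x = polyP n (t i)" "real (2*n) * t i \<in> \<int>" using Achar by blast
      have gy: "ongrid n (2 * t i)"
      proof -
        obtain J where J: "real (2*n) * t i = real_of_int J" using i(3) by (elim Ints_cases)
        then have "2 * t i = real_of_int J / real n" using n0 by (simp add: field_simps)
        then show ?thesis unfolding ongrid_def by blast
      qed
      obtain kk bb where kk: "(F^^kk) (t a) = t i + real_of_int bb"
      proof (cases "a \<le> i")
        case True
        have "(F^^(i - a)) (t a) = (F^^(i - a + a)) s0" unfolding t_def by (simp only: funpow_add comp_def)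
        also have "i - a + a = i" using True by simp
        finally have "(F^^(i - a)) (t a) = t i" unfolding t_def .
        then show ?thesis using that[of "i - a" 0] by simp
      next
        case False
        have "(F^^(i + q - a)) (t a) = (F^^(i + q - a + a)) s0" unfolding t_def by (simp only: funpow_add comp_def)
        also have "i + q - a + a = i + q" using False \<open>a < q\<close> by simp
        also have "(F^^(i + q)) s0 = (F^^i) ((F^^q) s0)" by (simp only: funpow_add comp_def)
        finally have "(F^^(i + q - a)) (t a) = (F^^i) ((F^^q) s0)" .
        also have "\<dots> = t i + real_of_int (int l)" unfolding per0 t_def
          using Fp_int[of i s0 "int l"] by simp
        finally show ?thesis using that by blast
      qed
      have "real q * (t i - t a) \<in> \<int>" by (rule upper[OF perx kk gy gx])
      moreover have "real (2*n) * (t i - t a) \<in> \<int>" using i(3) a(2) by (simp add: right_diff_distrib)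
      moreover have "odd q" unfolding q_def by simp
      ultimately obtain m where m: "t i - t a = real_of_int m / real d"
        using nt_gcd unfolding d_def by blast
      define c where "c = nat (m mod int d)"
      have c: "c < d" unfolding c_def using d0 by (simp add: nat_less_iff)
      have "real_of_int m / real d = real c / real d + real_of_int (m div int d)"
      proof -
        have "m = int d * (m div int d) + int c" unfolding c_def using d0 by simp
        then have "real_of_int m = real_of_int (int d * (m div int d) + int c)" by simp
        then have "real_of_int m = real d * real_of_int (m div int d) + real c" by simp
        then show ?thesis using d0 by (simp add: field_simps)
      qed
      then have "t i = (t a + real c / real d) + real_of_int (m div int d)" using m by simp
      then have "polyP n (t i) = polyP n (t a + real c / real d)" using polyP_periodic[OF n0] by simp
      then show "x \<in> (\<lambda>c. polyP n (t a + real c / real d)) ` {..<d}" using i(2) c by auto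
    next
      fix x assume "x \<in> (\<lambda>c. polyP n (t a + real c / real d)) ` {..<d}"
      then obtain c where c: "c < d" "x = polyP n (t a + real c / real d)" by auto
      define N where "N = k*c + a"
      have "(F^^(k*c)) (t a) = (F^^N) s0" unfolding t_def N_def by (simp only: funpow_add comp_def)
      then have "t a + real c / real d = t (N mod q) + real_of_int (int (N div q * l) - int c * \<beta>)"
        using kb[of c] tN[of N] by simp
      then have "x = polyP n (t (N mod q) + real_of_int (int (N div q * l) - int c * \<beta>))" using c(2) by simp
      then have xe: "x = polyP n (t (N mod q))" by (simp only: polyP_periodic[OF n0])
      have "real (2*n) * (t a + real c / real d) \<in> \<int>"
      proof -
        obtain e where e: "n = d * e" using dn(1) by blast
        have "real (2*n) * (real c / real d) = real_of_int (int (2 * c * e))" using d0 unfolding e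
          by (simp add: field_simps)
        then have "real (2*n) * (real c / real d) \<in> \<int>" by simp
        then show ?thesis using a(2) by (simp add: distrib_left)
      qed
      then have "x \<in> vertices n \<union> midpoints n" using c(2) VM_iff[OF n] by simp
      moreover have Nq: "N mod q < q" using q0 by simp
      moreover have "x = u (N mod q)" using ut[OF Nq] xe by simp
      ultimately show "x \<in> A" unfolding A_def q_def[symmetric] by blast
    qed
    have inj: "inj_on (\<lambda>c. polyP n (t a + real c / real d)) {..<d}"
    proof (rule inj_onI)
      fix c c' assume cc: "c \<in> {..<d}" "c' \<in> {..<d}"
        and eq: "polyP n (t a + real c / real d) = polyP n (t a + real c' / real d)"
      then have "(t a + real c / real d) - (t a + real c' / real d) \<in> \<int>" using polyP_eq_iff[OF n] by blast
      then obtain m where m: "real c / real d - real c' / real d = real_of_int m" by (auto elim: Ints_cases)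
      then have "real c - real c' = real_of_int m * real d" using d0 by (simp add: field_simps)
      then have "real_of_int (int c - int c') = real_of_int (m * int d)" by simp
      then have mm: "int c - int c' = m * int d" by (simp only: of_int_eq_iff)
      have "- int d < int c - int c'" "int c - int c' < int d" using cc by auto
      then have lt: "- int d < m * int d" "m * int d < int d" using mm by simp_all
      have "m = 0"
      proof (rule ccontr)
        assume "m \<noteq> 0"
        then consider "m \<ge> 1" | "m \<le> -1" by linarith
        then show False
        proof cases
          case 1
          then have "1 * int d \<le> m * int d" by (intro mult_right_mono) auto
          then show False using lt by linarith
        next
          case 2
          then have "m * int d \<le> (-1) * int d" by (intro mult_right_mono) auto
          then show False using lt by linarith
        qed
      qed
      then show "c = c'" using mm by simp
    qed
    have "card A = d" unfolding Aeq using card_image[OF inj] by simp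
    then show ?thesis unfolding A_def d_def q_def by simp
  qed
qed


end
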